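(* Let $r\ge4$, $n\ge1$, and $p\in[0,1/2]$ with $pn$ an integer. Let $K=\frac{2pn+1}{n}$ and define $d=b_r$ if $r\le(1+K)^2/K$, and $d=1+K$ otherwise. For $i\in\{0,\dots,n-1\}$ let $X_i=(x_{j,i})_{j\ge0}$ with $x_{j,i}=d^{\,j+i/n}$. Then each $X_i$ has robustness at most $r$. Moreover, let $T\ge 1+d$, let $l=l(T)$ be the best index at $T$, suppose the predicted answers to the queries $Q_0,\dots,Q_{n-1}$ differ from the true answers in at most $\eta n$ positions where $0\le\eta\le p$, let $N$ be the number of "no" answers in the prediction, and let $m=(N-1-pn)\bmod n\in\{0,\dots,n-1\}$ be the index chosen by the scheme $\mathrm{Robust}_p$. Then $$\frac{T}{\ell(X_m,T)}\ \le\ \frac{d^{1+\frac1n+2p}}{d-1}.$$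
   Context: A schedule is an increasing sequence $(x_j)_{j\ge0}$ of positive reals (contract lengths), executed in order, so the $j$-th contract completes at time $S_j=\sum_{k=0}^j x_k$. For $T>0$, $\ell(X,T)=\max\{x_j: S_j\le T\}$ ($0$ if none). The robustness of $X$ is $\sup_{j\ge1}S_j/x_{j-1}$. For $r\ge4$, $b_r=\frac{r+\sqrt{r^2-4r}}{2}$. For an interruption $T$, the best index $l(T)\in\{0,\dots,n-1\}$ is the index $i$ maximizing $\ell(X_i,T)$ (it is unique since all contract lengths $d^{j+i/n}$ are distinct). The binary prediction consists of answers to $n$ queries $Q_0,\dots,Q_{n-1}$, where $Q_i$ asks "Is the best index $l(T)$ at most $i-1$, i.e., is the best schedule among $X_0,\dots,X_{i-1}$?"; thus the true answer to $Q_i$ is "no" exactly when $i\le l(T)$, and the error-free number of "no" answers is $l(T)+1$. The prediction error $\eta\in[0,1]$ is the fraction of the $n$ predicted answers that are wrong. *)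

theory Defs
  imports Complex_Main "HOL-Library.Extended_Real"
begin

text \<open>A schedule is a sequence of contract lengths x :: nat => real.\<close>

definition compl_time :: "(nat \<Rightarrow> real) \<Rightarrow> nat \<Rightarrow> real" where
  "compl_time x j = (\<Sum>k\<le>j. x k)"

definition ell :: "(nat \<Rightarrow> real) \<Rightarrow> real \<Rightarrow> real" where
  "ell x T = (if {j. compl_time x j \<le> T} = {} then 0
              else Sup (x ` {j. compl_time x j \<le> T}))"

definition robustness :: "(nat \<Rightarrow> real) \<Rightarrow> ereal" where
  "robustness x = (SUP j\<in>{1..}. ereal (compl_time x j / x (j - 1)))"

definition b_r :: "real \<Rightarrow> real" where
  "b_r r = (r + sqrt (r^2 - 4 * r)) / 2"

definition K_par :: "real \<Rightarrow> nat \<Rightarrow> real" where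
  "K_par p n = (2 * p * real n + 1) / real n"

definition d_par :: "real \<Rightarrow> real \<Rightarrow> nat \<Rightarrow> real" where
  "d_par r p n = (if r \<le> (1 + K_par p n)^2 / K_par p n then b_r r else 1 + K_par p n)"

definition sched :: "real \<Rightarrow> nat \<Rightarrow> nat \<Rightarrow> nat \<Rightarrow> real" where
  "sched d n i j = d powr (real j + real i / real n)"

definition is_best_index :: "(nat \<Rightarrow> nat \<Rightarrow> real) \<Rightarrow> nat \<Rightarrow> real \<Rightarrow> nat \<Rightarrow> bool" where
  "is_best_index X n T l \<longleftrightarrow> l < n \<and> (\<forall>i<n. ell (X i) T \<le> ell (X l) T)"

text \<open>Predicted answers: pred i = True means the predicted answer to Q_i is "no".
  The true answer to Q_i is "no" iff i <= l.\<close>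
definition num_errors :: "nat \<Rightarrow> (nat \<Rightarrow> bool) \<Rightarrow> nat \<Rightarrow> nat" where
  "num_errors n pred l = card {i. i < n \<and> pred i \<noteq> (i \<le> l)}"

definition num_no :: "nat \<Rightarrow> (nat \<Rightarrow> bool) \<Rightarrow> nat" where
  "num_no n pred = card {i. i < n \<and> pred i}"

text \<open>Index chosen by Robust_p: (N - 1 - pn) mod n (pn is an integer).\<close>
definition robust_index :: "real \<Rightarrow> nat \<Rightarrow> (nat \<Rightarrow> bool) \<Rightarrow> nat" where
  "robust_index p n pred = nat ((int (num_no n pred) - 1 - \<lfloor>p * real n\<rfloor>) mod int n)"

end

theory Submission imports Defs begin

definition G :: "real \<Rightarrow> nat \<Rightarrow> real" where "G d j = (\<Sum>t\<le>j. d^t)"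
definition SS :: "real \<Rightarrow> nat \<Rightarrow> nat \<Rightarrow> real" where
  "SS d n k = (d powr (1/real n))^(k mod n) * G d (k div n)"

lemma G_Suc: "G d (Suc j) = 1 + d * G d j"
  unfolding G_def sum.atMost_Suc_shift by (simp add: sum_distrib_left)

lemma G_ge: "d \<ge> 1 \<Longrightarrow> G d j \<ge> real j + 1"
proof (induction j)
  case 0 then show ?case by (simp add: G_def)
next
  case (Suc j)
  then have "d * G d j \<ge> 1 * (real j + 1)" by (intro mult_mono) auto
  then show ?case by (simp add: G_Suc)
qed

lemma G_closed: "(d - 1) * G d j = d^(Suc j) - 1"
  by (induction j) (auto simp: G_Suc algebra_simps G_def)

lemma c_pos: "d > 1 \<Longrightarrow> d powr (1/real n) > 0" by simp

lemma c_gt1: "d > 1 \<Longrightarrow> n \<ge> 1 \<Longrightarrow> d powr (1/real n) > 1"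
proof -
  assume a: "d > 1" "n \<ge> 1"
  have "d powr 0 < d powr (1/real n)" using a by (intro powr_less_mono) auto
  thus ?thesis using a by simp
qed

lemma c_pow_n: "d > 1 \<Longrightarrow> n \<ge> 1 \<Longrightarrow> (d powr (1/real n))^n = d"
proof -
  assume "d > 1" "n \<ge> 1"
  have "(d powr (1/real n))^n = (d powr (1/real n)) powr real n"
    using \<open>d>1\<close> by (subst powr_realpow) auto
  also have "\<dots> = d" using \<open>n\<ge>1\<close> \<open>d>1\<close> by (simp add: powr_powr)
  finally show ?thesis .
qed

lemma sched_c: "d > 1 \<Longrightarrow> n \<ge> 1 \<Longrightarrow> sched d n i j = (d powr (1/real n))^(j*n+i)"
proof -
  assume "d > 1" "n \<ge> 1"
  have "(d powr (1/real n))^(j*n+i) = (d powr (1/real n)) powr real (j*n+i)"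
    using \<open>d>1\<close> by (subst powr_realpow) auto
  also have "\<dots> = d powr (real j + real i / real n)" using \<open>n\<ge>1\<close>
    by (simp add: powr_powr field_simps)
  finally show ?thesis by (simp add: sched_def)
qed

lemma compl_sched: "d > 1 \<Longrightarrow> n \<ge> 1 \<Longrightarrow> compl_time (sched d n i) j = (d powr (1/real n))^i * G d j"
proof -
  assume a: "d > 1" "n \<ge> 1"
  have "\<And>k. (d powr (1/real n))^(k*n+i) = (d powr (1/real n))^i * d^k"
  proof -
    fix k
    have "(d powr (1/real n))^(k*n+i) = ((d powr (1/real n))^n)^k * (d powr (1/real n))^i"
      by (simp add: power_add flip: power_mult) (simp add: mult.commute)
    thus "(d powr (1/real n))^(k*n+i) = (d powr (1/real n))^i * d^k" using a by (simp add: c_pow_n)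
  qed
  thus ?thesis using a by (simp add: compl_time_def G_def sched_c sum_distrib_left)
qed

context
  fixes d :: real and n :: nat
  assumes d1: "d > 1" and n1: "n \<ge> 1"
begin

lemma G_pos: "G d j > 0" using G_ge[of d j] d1 by simp

lemma SS_sched: "i < n \<Longrightarrow> compl_time (sched d n i) j = SS d n (j*n+i)"
  using d1 n1 by (simp add: compl_sched SS_def)

lemma SS_mono: "SS d n k < SS d n (Suc k)"
proof (cases "Suc (k mod n) = n")
  case True
  have "SS d n k = (d powr (1/real n))^(k mod n) * G d (k div n)" by (simp add: SS_def)
  also have "\<dots> < (d powr (1/real n))^n * G d (k div n)"
    using True G_pos c_gt1[OF d1 n1] by (intro mult_strict_right_mono power_strict_increasing) auto
  also have "\<dots> = d * G d (k div n)" using d1 n1 by (simp add: c_pow_n)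
  also have "\<dots> < SS d n (Suc k)" using True n1 by (simp add: SS_def mod_Suc div_Suc G_Suc)
  finally show ?thesis .
next
  case False
  then have "Suc k mod n = Suc (k mod n)" "Suc k div n = k div n"
    using n1 by (auto simp: mod_Suc div_Suc)
  have "(d powr (1/real n))^(k mod n) * G d (k div n) < (d powr (1/real n))^(Suc (k mod n)) * G d (k div n)"
    using G_pos c_gt1[OF d1 n1] by (intro mult_strict_right_mono power_strict_increasing) auto
  then show ?thesis
    using \<open>Suc k mod n = Suc (k mod n)\<close> \<open>Suc k div n = k div n\<close> by (simp add: SS_def)
qed

lemma SS_le_iff: "SS d n a \<le> SS d n b \<longleftrightarrow> a \<le> b"
  by (metis SS_mono lift_Suc_mono_less_iff not_le)

lemma SS_upper: "(d - 1) * SS d n k \<le> d * (d powr (1/real n))^k"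
proof -
  have "(d - 1) * SS d n k = (d powr (1/real n))^(k mod n) * (d^(Suc (k div n)) - 1)"
    by (simp add: SS_def G_closed flip: G_closed[of d])
  also have "\<dots> \<le> (d powr (1/real n))^(k mod n) * d^(Suc (k div n))"
    using d1 by (intro mult_left_mono) auto
  also have "\<dots> = d * ((d powr (1/real n))^n)^(k div n) * (d powr (1/real n))^(k mod n)"
    using d1 n1 by (simp add: c_pow_n)
  also have "\<dots> = d * (d powr (1/real n))^k"
  proof -
    have "n * (k div n) + k mod n = k" by simp
    then show ?thesis by (metis mult.assoc power_mult power_add)
  qed
  finally show ?thesis .
qed

lemma SS_jn: "SS d n (j*n) = G d j" using n1 by (simp add: SS_def)

lemma SS_small: "SS d n (n - 1) \<le> d"
proof -
  have "SS d n (n - 1) = (d powr (1/real n))^(n-1)" using n1 by (simp add: SS_def G_def)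
  also have "\<dots> \<le> (d powr (1/real n))^n" using c_gt1[OF d1 n1] by (intro power_increasing) auto
  finally show ?thesis using d1 n1 by (simp add: c_pow_n)
qed

lemma SS_0: "SS d n 0 = 1" by (simp add: SS_def G_def)

lemma exists_big: "\<exists>k. T < SS d n k"
proof -
  have "T < real (nat \<lceil>T\<rceil>) + 1" by linarith
  also have "\<dots> \<le> SS d n (nat \<lceil>T\<rceil> * n)" unfolding SS_jn using G_ge[of d "nat \<lceil>T\<rceil>"] d1 by linarith
  finally show ?thesis by blast
qed

definition kstar :: "real \<Rightarrow> nat" where "kstar T = (LEAST k. T < SS d n k) - 1"

lemma kstar:
  assumes "T \<ge> 1 + d"
  shows "SS d n k \<le> T \<longleftrightarrow> k \<le> kstar T" and "T < SS d n (Suc (kstar T))"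
    and "n - 1 \<le> kstar T"
proof -
  define L where "L = (LEAST k. T < SS d n k)"
  have TL: "T < SS d n L" unfolding L_def using exists_big by (rule LeastI_ex)
  have "L \<noteq> 0" proof
    assume "L = 0" then have "T < 1" using TL SS_0 by simp
    then show False using assms d1 by linarith
  qed
  then have SL: "Suc (kstar T) = L" by (simp add: kstar_def L_def[symmetric])
  show "T < SS d n (Suc (kstar T))" using TL SL by simp
  show kk: "SS d n k \<le> T \<longleftrightarrow> k \<le> kstar T" for k
  proof
    assume "SS d n k \<le> T"
    then have "\<not> L \<le> k" using TL SS_le_iff[of L k] by auto
    then show "k \<le> kstar T" using SL by simp
  next
    assume "k \<le> kstar T"
    then have "k < L" using SL by simp
    then have "\<not> T < SS d n k" unfolding L_def by (rule not_less_Least)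
    then show "SS d n k \<le> T" by linarith
  qed
  have "SS d n (n - 1) \<le> T" using SS_small assms by linarith
  then show "n - 1 \<le> kstar T" using kk by blast
qed

lemma ell_formula:
  assumes "T \<ge> 1 + d" "i < n"
  shows "ell (sched d n i) T = (d powr (1/real n))^(kstar T - (kstar T - i) mod n)"
proof -
  define ks where "ks = kstar T"
  define ji where "ji = (ks - i) div n"
  have iks: "i \<le> ks" using kstar(3)[OF assms(1)] assms(2) unfolding ks_def by linarith
  have dm: "ji * n + (ks - i) mod n = ks - i" unfolding ji_def by simp
  have eq: "ks - (ks - i) mod n = ji * n + i" using dm iks by linarith
  have A: "{j. compl_time (sched d n i) j \<le> T} = {j. j*n+i \<le> ks}"
    unfolding ks_def by (simp only: SS_sched[OF assms(2)] kstar(1)[OF assms(1)])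
  have mem: "ji \<in> {j. j*n+i \<le> ks}" using eq by auto
  have "Sup (sched d n i ` {j. j*n+i \<le> ks}) = (d powr (1/real n))^(ji * n + i)"
  proof (rule cSup_eq_maximum)
    show "(d powr (1/real n))^(ji * n + i) \<in> sched d n i ` {j. j*n+i \<le> ks}"
      using mem d1 n1 by (auto simp: sched_c)
  next
    fix x assume "x \<in> sched d n i ` {j. j*n+i \<le> ks}"
    then obtain j where j: "j*n+i \<le> ks" "x = sched d n i j" by auto
    then have "j*n \<le> ks - i" by linarith
    then have "j \<le> ji" unfolding ji_def using n1 by (simp add: less_eq_div_iff_mult_less_eq)
    then have "j*n+i \<le> ji*n+i" by simp
    then show "x \<le> (d powr (1/real n))^(ji * n + i)"
      using j c_gt1[OF d1 n1] d1 n1 by (simp add: sched_c power_increasing)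
  qed
  note S = this
  have ne: "{j. j*n+i \<le> ks} \<noteq> {}" using mem by blast
  have "ell (sched d n i) T = Sup (sched d n i ` {j. j*n+i \<le> ks})"
    unfolding ell_def A using ne by (rule if_not_P)
  also have "\<dots> = (d powr (1/real n))^(ks - (ks - i) mod n)" unfolding S eq ..
  finally show ?thesis unfolding ks_def .
qed

lemma count_bounds:
  assumes "l < n"
  shows "num_no n pred \<le> Suc l + num_errors n pred l" "Suc l \<le> num_no n pred + num_errors n pred l"
proof -
  let ?A = "{i. i<n \<and> pred i}" and ?B = "{i. i<n \<and> i \<le> l}" and ?E = "{i. i<n \<and> pred i \<noteq> (i\<le>l)}"
  have fA: "finite ?A" and fB: "finite ?B" and fE: "finite ?E" by auto
  have cB: "card ?B = Suc l"
  proof -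
    have "?B = {..l}" using assms by auto
    then show ?thesis by simp
  qed
  have "card ?A \<le> card (?B \<union> ?E)" using fB fE by (intro card_mono) auto
  also have "\<dots> \<le> card ?B + card ?E" by (rule card_Un_le)
  finally show "num_no n pred \<le> Suc l + num_errors n pred l"
    unfolding num_no_def num_errors_def cB .
  have "card ?B \<le> card (?A \<union> ?E)" using fA fE by (intro card_mono) auto
  also have "\<dots> \<le> card ?A + card ?E" by (rule card_Un_le)
  finally show "Suc l \<le> num_no n pred + num_errors n pred l"
    unfolding num_no_def num_errors_def cB .
qed

lemma main_bound:
  fixes P :: nat
  assumes T: "T \<ge> 1 + d" and best: "is_best_index (sched d n) n T l"
    and err: "num_errors n pred l \<le> P"
  shows "T / ell (sched d n (nat ((int (num_no n pred) - 1 - int P) mod int n))) T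
       \<le> d * (d powr (1/real n))^(2*P+1) / (d - 1)"
proof -
  define c where "c = d powr (1/real n)"
  have c1: "c > 1" unfolding c_def by (rule c_gt1[OF d1 n1])
  define ks where "ks = kstar T"
  have nks: "n - 1 \<le> ks" unfolding ks_def by (rule kstar(3)[OF T])
  have ln: "l < n" and lbest: "\<forall>i<n. ell (sched d n i) T \<le> ell (sched d n l) T"
    using best unfolding is_best_index_def by auto
  have ell: "\<And>i. i < n \<Longrightarrow> ell (sched d n i) T = c^(ks - (ks - i) mod n)"
    unfolding c_def ks_def by (rule ell_formula[OF T])
  define i0 where "i0 = ks mod n"
  have i0n: "i0 < n" unfolding i0_def using n1 by simp
  have "(ks - i0) mod n = 0" unfolding i0_def by (simp add: minus_mod_eq_mult_div)
  then have "ell (sched d n i0) T = c^ks" using ell[OF i0n] by simp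
  then have "c^ks \<le> c^(ks - (ks - l) mod n)" using lbest i0n ell[OF ln] by metis
  then have "ks \<le> ks - (ks - l) mod n" using c1 by (rule power_le_imp_le_exp[rotated])
  moreover have lks: "l \<le> ks" using ln nks by linarith
  moreover have "(ks - l) mod n \<le> ks - l" by (rule mod_less_eq_dividend)
  ultimately have lmod: "(ks - l) mod n = 0" by linarith
  have cong: "int ks mod int n = int l mod int n"
  proof -
    from lmod obtain t where "ks - l = n * t" by auto
    then have "ks = l + n * t" using lks by linarith
    then have "int ks = int l + int n * int t" by simp
    then show ?thesis by simp
  qed
  define N where "N = num_no n pred"
  define q where "q = int N - 1 - int P"
  define m where "m = nat (q mod int n)"
  have qm: "int m = q mod int n" unfolding m_def using n1 by simp
  have "q mod int n < int n" using n1 by simp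
  then have mn: "m < n" using qm by linarith
  have cb: "N \<le> Suc l + num_errors n pred l" "Suc l \<le> N + num_errors n pred l"
    unfolding N_def using count_bounds[OF ln] by auto
  have q1: "int l - q \<ge> 0" and q2: "int l - q \<le> 2 * int P" using cb err unfolding q_def by linarith+
  define \<delta> where "\<delta> = (ks - m) mod n"
  have mks: "m \<le> ks" using mn nks by linarith
  have "int \<delta> = (int ks - int m) mod int n" unfolding \<delta>_def using mks by (simp add: of_nat_mod of_nat_diff)
  also have "\<dots> = (int ks - q) mod int n" unfolding qm by (simp add: mod_diff_right_eq)
  also have "\<dots> = (int l - q) mod int n" using cong by (metis mod_diff_left_eq)
  also have "\<dots> \<le> int l - q" using q1 by (rule zmod_le_nonneg_dividend)
  finally have \<delta>P: "\<delta> \<le> 2 * P" using q2 by linarith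
  have \<delta>ks: "\<delta> \<le> ks" unfolding \<delta>_def by (meson diff_le_self le_trans mod_less_eq_dividend)
  have em: "ell (sched d n m) T = c^(ks - \<delta>)" using ell[OF mn] unfolding \<delta>_def .
  have Epos: "c^(ks - \<delta>) > 0" using c1 by simp
  have "(d - 1) * T < (d - 1) * SS d n (Suc ks)"
    using kstar(2)[OF T] d1 unfolding ks_def by simp
  also have "\<dots> \<le> d * c^(Suc ks)" unfolding c_def by (rule SS_upper)
  also have "\<dots> = d * c^(\<delta> + 1) * c^(ks - \<delta>)"
    using \<delta>ks by (simp add: mult.assoc flip: power_add)
  also have "\<dots> \<le> d * c^(2*P+1) * c^(ks - \<delta>)"
  proof -
    have "c^(\<delta> + 1) \<le> c^(2*P+1)" using \<delta>P c1 by (intro power_increasing) auto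
    then have "d * c^(\<delta> + 1) \<le> d * c^(2*P+1)" using d1 by (intro mult_left_mono) auto
    then show ?thesis using Epos by (intro mult_right_mono) auto
  qed
  finally have key: "(d - 1) * T \<le> d * c^(2*P+1) * c^(ks - \<delta>)" by simp
  have "T / c^(ks - \<delta>) \<le> d * c^(2*P+1) / (d - 1)"
  proof -
    define E where "E = c^(ks - \<delta>)"
    define Y where "Y = d * c^(2*P+1)"
    have k2: "T * (d - 1) \<le> Y * E" using key unfolding E_def Y_def by (simp add: mult.commute)
    have "T \<le> (Y * E) / (d - 1)" using k2 d1 by (subst pos_le_divide_eq) auto
    also have "\<dots> = Y / (d - 1) * E" by simp
    finally have "T \<le> Y / (d - 1) * E" .
    then have "T / E \<le> Y / (d - 1)" using Epos unfolding E_def by (subst pos_divide_le_eq) auto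
    then show ?thesis unfolding E_def Y_def .
  qed
  then show ?thesis using em unfolding m_def q_def N_def c_def by simp
qed

end


lemma sched_pow: "d > 1 \<Longrightarrow> n \<ge> 1 \<Longrightarrow> sched d n i k = (d powr (1/real n))^i * d^k"
proof -
  assume a: "d > 1" "n \<ge> 1"
  have "(d powr (1/real n))^(k*n+i) = ((d powr (1/real n))^n)^k * (d powr (1/real n))^i"
    by (simp add: power_add flip: power_mult) (simp add: mult.commute)
  thus ?thesis using a by (simp add: c_pow_n sched_c)
qed

lemma robust_gen:
  assumes d1: "d > 1" and n1: "n \<ge> 1" and dr: "d^2 \<le> r * (d - 1)"
  shows "robustness (sched d n i) \<le> ereal r"
  unfolding robustness_def
proof (rule SUP_least)
  fix j :: nat assume "j \<in> {1..}"
  then have j1: "j \<ge> 1" by simp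
  define c where "c = d powr (1/real n)"
  have cp: "c^i > 0" unfolding c_def using d1 by simp
  have dp: "d^(j-1) > 0" using d1 by simp
  have "(d - 1) * G d j = d^(Suc j) - 1" by (rule G_closed)
  also have "\<dots> \<le> d^2 * d^(j-1)" using j1 by (simp add: power_add[symmetric]) 
  also have "\<dots> \<le> r * (d - 1) * d^(j-1)" using dr dp by (intro mult_right_mono) auto
  finally have "(d - 1) * G d j \<le> (d - 1) * (r * d^(j-1))" by (simp add: algebra_simps)
  then have Gb: "G d j \<le> r * d^(j-1)" using d1 by simp
  have "compl_time (sched d n i) j / sched d n i (j - 1) = G d j / d^(j-1)"
    using d1 n1 cp unfolding c_def by (simp add: compl_sched sched_pow)
  also have "\<dots> \<le> r" using Gb dp by (simp add: divide_simps)
  finally show "ereal (compl_time (sched d n i) j / sched d n i (j - 1)) \<le> ereal r" by simp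
qed


lemma d_facts:
  fixes r p :: real and n :: nat
  assumes r4: "r \<ge> 4" and n1: "n \<ge> 1" and p0: "0 \<le> p"
  shows "d_par r p n > 1 \<and> (d_par r p n)^2 \<le> r * (d_par r p n - 1)"
proof -
  define K where "K = K_par p n"
  have "0 \<le> p * real n" using p0 by simp
  then have Kp: "K > 0" unfolding K_def K_par_def using n1 by (simp add: field_simps)
  show ?thesis
  proof (cases "r \<le> (1 + K)^2 / K")
    case True
    then have dd: "d_par r p n = b_r r" unfolding d_par_def K_def by simp
    define s where "s = sqrt (r^2 - 4*r)"
    have "4 * r \<le> r * r" using r4 by (intro mult_right_mono) auto
    then have s0: "s \<ge> 0" unfolding s_def by (simp add: power2_eq_square)
    then have s2: "s^2 = r^2 - 4*r" unfolding s_def by (simp add: power2_eq_square)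
    have b: "b_r r = (r + s)/2" unfolding b_r_def s_def ..
    have "b_r r > 1" using b s0 r4 by simp
    moreover have "(b_r r)^2 = r * (b_r r - 1)" unfolding b
      using s2 by (simp add: power2_eq_square field_simps)
    ultimately show ?thesis using dd by simp
  next
    case False
    then have dd: "d_par r p n = 1 + K" unfolding d_par_def K_def by simp
    have "(1 + K)^2 < r * K" using False Kp by (simp add: field_simps)
    then show ?thesis using dd Kp by simp
  qed
qed

theorem theorem4:
  fixes r p :: real and n :: nat
  assumes "r \<ge> 4" and "n \<ge> 1" and "0 \<le> p" and "p \<le> 1/2"
    and "p * real n \<in> \<int>"
  shows "(\<forall>i<n. robustness (sched (d_par r p n) n i) \<le> ereal r) \<and>
    (\<forall>(T::real) (l::nat) (pred::nat \<Rightarrow> bool) (\<eta>::real).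
       T \<ge> 1 + d_par r p n \<and>
       is_best_index (sched (d_par r p n) n) n T l \<and>
       0 \<le> \<eta> \<and> \<eta> \<le> p \<and>
       real (num_errors n pred l) \<le> \<eta> * real n
     \<longrightarrow> T / ell (sched (d_par r p n) n (robust_index p n pred)) T
           \<le> d_par r p n powr (1 + 1 / real n + 2 * p) / (d_par r p n - 1))"
proof -
  define d where "d = d_par r p n"
  have d1: "d > 1" and dr: "d^2 \<le> r * (d - 1)" using d_facts[OF assms(1,2,3)] unfolding d_def by auto
  have n1: "n \<ge> 1" by fact
  obtain z where z: "p * real n = real_of_int z" using assms(5) by (auto elim: Ints_cases)
  have z0: "z \<ge> 0" using z assms(3) by (metis of_int_0_le_iff of_nat_0_le_iff zero_le_mult_iff)
  define P where "P = nat z"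
  have Pr: "real P = p * real n" unfolding P_def using z z0 by simp
  have fl: "\<lfloor>p * real n\<rfloor> = int P" unfolding P_def using z z0 by simp
  have part2: "T / ell (sched d n (robust_index p n pred)) T
           \<le> d powr (1 + 1 / real n + 2 * p) / (d - 1)"
    if T: "T \<ge> 1 + d" and best: "is_best_index (sched d n) n T l" and e0: "\<eta> \<le> p"
      and err: "real (num_errors n pred l) \<le> \<eta> * real n" for T l pred \<eta>
  proof -
    have "real (num_errors n pred l) \<le> real P" using err e0 Pr
      by (metis mult_right_mono of_nat_0_le_iff order_trans)
    then have errP: "num_errors n pred l \<le> P" by simp
    have ri: "robust_index p n pred = nat ((int (num_no n pred) - 1 - int P) mod int n)"
      unfolding robust_index_def fl ..
    have "T / ell (sched d n (robust_index p n pred)) T \<le> d * (d powr (1/real n))^(2*P+1) / (d - 1)"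
      unfolding ri by (rule main_bound[OF d1 n1 T best errP])
    also have "d * (d powr (1/real n))^(2*P+1) = d powr (1 + 1 / real n + 2 * p)"
    proof -
      have "(d powr (1/real n))^(2*P+1) = (d powr (1/real n)) powr real (2*P+1)"
        using d1 by (subst powr_realpow) auto
      also have "\<dots> = d powr (1 / real n + 2 * p)"
        using n1 Pr by (simp add: powr_powr field_simps)
      finally show ?thesis using d1 by (simp add: powr_add)
    qed
    finally show ?thesis .
  qed
  show ?thesis
    using robust_gen[OF d1 n1 dr] part2 unfolding d_def by blast
qed

end
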